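(* The zero points of $\mathbf B$ on the unit sphere are exactly the two critical points of $U^\ast$ outside the equator circle $z=0$, namely the physical centers $\hat{\mathbf p}_0^\pm$ (the shapes of the regular, i.e. equilateral, triangle) on the hemispheres $z>0$ and $z<0$.
   Context: Masses $m_1,m_2,m_3>0$, $m_1+m_2+m_3=1$; $\hat m_1=m_2m_3$, $\hat m_2=m_3m_1$, $\hat m_3=m_1m_2$. The shape sphere (oriented m-triangles modulo rotation with $\sum m_i|\mathbf a_i|^2=1$, with kinematic metric, magnified by factor 2) is identified with the unit sphere $S^2\subset\mathbb R^3$, with the equator $z=0$ the collinear shapes, and $\hat{\mathbf b}_1,\hat{\mathbf b}_2,\hat{\mathbf b}_3$ the unit vectors on the equator representing the binary collision shapes $\mathbf a_2=\mathbf a_3$, $\mathbf a_3=\mathbf a_1$, $\mathbf a_1=\mathbf a_2$. In this picture the Newtonian potential $U=\sum_{i<j}m_im_j/|\mathbf a_i-\mathbf a_j|$ restricted to unit size is $U^\ast(\mathbf p)=\sum_{i=1}^3\frac{k_i}{|\mathbf p-\hat{\mathbf b}_i|}$ with $k_i=\frac{2\hat m_i^{3/2}}{\sqrt{1-m_i}}$, and $\mathbf B(\mathbf p)=\sum_{i=1}^3\frac{k_i\hat{\mathbf b}_i}{|\mathbf p-\hat{\mathbf b}_i|^3}\in\mathbb R^2\times\{0\}$ for $\mathbf p\in S^2$. *)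

theory Defs
  imports "HOL-Analysis.Analysis"
begin

text \<open>Masses are m 1, m 2, m 3; a configuration is a :: nat \<Rightarrow> complex (a 1, a 2, a 3 in the plane).\<close>

definition normalized_config :: "(nat \<Rightarrow> real) \<Rightarrow> (nat \<Rightarrow> complex) \<Rightarrow> bool" where
  "normalized_config m a \<longleftrightarrow>
     (\<Sum>i\<in>{1,2,3::nat}. of_real (m i) * a i) = 0 \<and>
     (\<Sum>i\<in>{1,2,3::nat}. m i * (cmod (a i))\<^sup>2) = 1"

definition jacobi1 :: "(nat \<Rightarrow> real) \<Rightarrow> (nat \<Rightarrow> complex) \<Rightarrow> complex" where
  "jacobi1 m a = of_real (sqrt (m 1 * m 2 / (m 1 + m 2))) * (a 2 - a 1)"

definition jacobi2 :: "(nat \<Rightarrow> real) \<Rightarrow> (nat \<Rightarrow> complex) \<Rightarrow> complex" where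
  "jacobi2 m a = of_real (sqrt (m 3 * (m 1 + m 2))) *
      (a 3 - (of_real (m 1) * a 1 + of_real (m 2) * a 2) / of_real (m 1 + m 2))"

text \<open>Shape map (Hopf map): normalized configurations onto the unit sphere, i.e. the
  shape sphere with kinematic metric magnified by 2; collinear shapes go to z = 0.\<close>
definition shape :: "(nat \<Rightarrow> real) \<Rightarrow> (nat \<Rightarrow> complex) \<Rightarrow> real^3" where
  "shape m a = (let x = jacobi1 m a; y = jacobi2 m a; w = x * cnj y in
     vector [(cmod x)\<^sup>2 - (cmod y)\<^sup>2, 2 * Re w, 2 * Im w])"

definition collision_config :: "(nat \<Rightarrow> real) \<Rightarrow> nat \<Rightarrow> (nat \<Rightarrow> complex)" where
  "collision_config m i = (let t = 1 / sqrt (m i * (1 - m i)) in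
     (\<lambda>j. if j = i then of_real ((1 - m i) * t) else of_real (- m i * t)))"

definition bhat :: "(nat \<Rightarrow> real) \<Rightarrow> nat \<Rightarrow> real^3" where
  "bhat m i = shape m (collision_config m i)"

definition mhat :: "(nat \<Rightarrow> real) \<Rightarrow> nat \<Rightarrow> real" where
  "mhat m i = (\<Prod>j\<in>{1,2,3::nat} - {i}. m j)"

definition kcoef :: "(nat \<Rightarrow> real) \<Rightarrow> nat \<Rightarrow> real" where
  "kcoef m i = 2 * mhat m i powr (3/2) / sqrt (1 - m i)"

definition Ustar :: "(nat \<Rightarrow> real) \<Rightarrow> real^3 \<Rightarrow> real" where
  "Ustar m p = (\<Sum>i\<in>{1,2,3::nat}. kcoef m i / norm (p - bhat m i))"

definition Bfield :: "(nat \<Rightarrow> real) \<Rightarrow> real^3 \<Rightarrow> real^3" where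
  "Bfield m p = (\<Sum>i\<in>{1,2,3::nat}. (kcoef m i / norm (p - bhat m i) ^ 3) *\<^sub>R bhat m i)"

definition sphere_critical :: "(real^3 \<Rightarrow> real) \<Rightarrow> real^3 \<Rightarrow> bool" where
  "sphere_critical f p \<longleftrightarrow>
     (\<exists>D. (f has_derivative D) (at p) \<and> (\<forall>v. v \<bullet> p = 0 \<longrightarrow> D v = 0))"

definition equilateral_shapes :: "(nat \<Rightarrow> real) \<Rightarrow> (real^3) set" where
  "equilateral_shapes m = {shape m a | a. normalized_config m a \<and>
      cmod (a 1 - a 2) = cmod (a 2 - a 3) \<and> cmod (a 2 - a 3) = cmod (a 3 - a 1)}"

end

theory Submission imports Defs begin

declare One_nat_def [simp del]

definition sig :: "(nat \<Rightarrow> real) \<Rightarrow> real" where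
  "sig m = m 1 * m 2 + m 2 * m 3 + m 3 * m 1"
definition qq :: "(nat \<Rightarrow> real) \<Rightarrow> real" where
  "qq m = sqrt (m 1 * m 2 * m 3)"
definition mu :: "(nat \<Rightarrow> real) \<Rightarrow> nat \<Rightarrow> real" where
  "mu m i = mhat m i / (1 - m i)"

lemma norm3_sq: "norm (p::real^3) ^ 2 = p$1^2 + p$2^2 + p$3^2"
  by (simp add: norm_eq_sqrt_inner inner_vec_def sum_3 power2_eq_square)

lemma inner3: "inner (p::real^3) q = p$1 * q$1 + p$2 * q$2 + p$3 * q$3"
  by (simp add: inner_vec_def sum_3)

lemma vec3_eq: "(p::real^3) = q \<longleftrightarrow> p$1 = q$1 \<and> p$2 = q$2 \<and> p$3 = q$3"
  by (simp add: vec_eq_iff forall_3)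

lemma shape_real:
  assumes "jacobi1 m a = of_real X" "jacobi2 m a = of_real Y"
  shows "shape m a = vector [X^2 - Y^2, 2 * X * Y, 0]"
  using assms by (simp add: shape_def Let_def mult.assoc)

lemma jac_real:
  assumes "a 1 = of_real A1" "a 2 = of_real A2" "a 3 = of_real A3"
  shows "jacobi1 m a = of_real (sqrt (m 1 * m 2 / (m 1 + m 2)) * (A2 - A1))"
    "jacobi2 m a = of_real (sqrt (m 3 * (m 1 + m 2)) * (A3 - (m 1 * A1 + m 2 * A2) / (m 1 + m 2)))"
  using assms by (simp_all add: jacobi1_def jacobi2_def)

locale abc =
  fixes a b c q s :: real
  assumes a: "a > 0" and b: "b > 0" and c: "c > 0" and sum1: "a + b + c = 1"
    and q2: "q^2 = a*b*c" and sdef: "s = a*b+b*c+c*a"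
begin
lemma spos: "s > 0" using a b c sdef by (simp add: add_pos_pos)
lemma pos1: "1 - a > 0" "1 - b > 0" "1 - c > 0" "a + b > 0" using a b c sum1 by auto

lemma N1: "((b - a*c)/((a+b)*(1-a)))^2 + (2*q/((a+b)*(1-a)))^2 = 1"
  using pos1 a b c sum1 q2 by (simp add: divide_simps) algebra
lemma N2: "((a - b*c)/((a+b)*(1-b)))^2 + (- 2*q/((a+b)*(1-b)))^2 = 1"
  using pos1 a b c sum1 q2 by (simp add: divide_simps) algebra
lemma S1: "(1-a) * ((b - a*c)/((a+b)*(1-a))) + (1-b) * ((a - b*c)/((a+b)*(1-b))) - (1-c) = 0"
  using pos1 a b c sum1 by (simp add: divide_simps) (simp add: algebra_simps)
lemma S2: "(1-a) * (2*q/((a+b)*(1-a))) + (1-b) * (- 2*q/((a+b)*(1-b))) = 0"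
  using pos1 by (simp add: divide_simps)
lemma Q1: "(b - a*c)/((a+b)*(1-a)) * (2 * (a*b/(1-c))/s - 1) + 2*q/((a+b)*(1-a)) * (q*(a-b)/((a+b)* s)) = 1 - 2*(b*c/(1-a))/s"
  using pos1 spos a b c sum1 q2 sdef by (simp add: divide_simps) algebra
lemma Q2: "(a - b*c)/((a+b)*(1-b)) * (2 * (a*b/(1-c))/s - 1) + (- 2*q/((a+b)*(1-b))) * (q*(a-b)/((a+b)* s)) = 1 - 2*(a*c/(1-b))/s"
  using pos1 spos a b c sum1 q2 sdef by (simp add: divide_simps) algebra
lemma Q3: "(2 * (a*b/(1-c))/s - 1)^2 + (q*(a-b)/((a+b)* s))^2 + (sqrt 3 * q / s)^2 = 1"
  using pos1 spos a b c sum1 q2 sdef by (simp add: divide_simps power_mult_distrib) algebra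
lemma I1: "a*b/(a+b) - c*(a+b)*(1 - b/(a+b) + (b/(a+b))^2) = 2*(a*b/(1-c)) - s"
  using pos1 sum1 sdef by (simp add: divide_simps) algebra
lemma SM: "(1-a) * (b*c/(1-a)) + (1-b) * (a*c/(1-b)) + (1-c) * (a*b/(1-c)) = s"
proof -
  have "(1-a) * (b*c/(1-a)) = b*c" "(1-b) * (a*c/(1-b)) = a*c" "(1-c) * (a*b/(1-c)) = a*b" using pos1 by auto
  then show ?thesis using sdef by simp
qed
end

definition P1 :: "(nat \<Rightarrow> real) \<Rightarrow> real" where "P1 m = 2 * mu m 3 / sig m - 1"
definition P2 :: "(nat \<Rightarrow> real) \<Rightarrow> real" where "P2 m = qq m * (m 1 - m 2) / ((m 1 + m 2) * sig m)"
definition P3 :: "(nat \<Rightarrow> real) \<Rightarrow> real" where "P3 m = sqrt 3 * qq m / sig m"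
definition pp :: "(nat \<Rightarrow> real) \<Rightarrow> real \<Rightarrow> real^3" where "pp m s = vector [P1 m, P2 m, s * P3 m]"

lemma rsq:
  fixes p :: "real^3"
  assumes "norm p = 1" "u^2 + v^2 = 1"
  shows "norm (p - vector [u, v, 0]) ^ 2 = 2 - 2 * (p$1 * u + p$2 * v)"
proof -
  have "p$1^2 + p$2^2 + p$3^2 = 1" using assms(1) norm3_sq[of p] by simp
  then show ?thesis unfolding norm3_sq using assms(2) by (simp add: power2_eq_square algebra_simps)
qed

lemma dnorm:
  fixes p b :: "real^3"
  assumes "p \<noteq> b"
  shows "((\<lambda>x. k / norm (x - b)) has_derivative (\<lambda>v. - k * inner v (p - b) / norm (p - b) ^ 3)) (at p)"
proof -
  have n: "norm (p - b) \<noteq> 0" using assms by simp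
  have g: "((\<lambda>x. norm (x - b)) has_derivative (\<lambda>h. inner h (sgn (p - b)))) (at p)"
    using has_derivative_compose[OF has_derivative_diff[OF has_derivative_ident has_derivative_const] has_derivative_norm[of "p - b"]] assms
    by simp
  have "((\<lambda>x. k / norm (x - b)) has_derivative
     (\<lambda>h. - k * (inverse (norm (p - b)) * inner h (sgn (p - b)) * inverse (norm (p - b))) + 0 / norm (p - b))) (at p)"
    by (rule has_derivative_divide[OF has_derivative_const g]) (use n in auto)
  moreover have "(\<lambda>h. - k * (inverse (norm (p - b)) * inner h (sgn (p - b)) * inverse (norm (p - b))) + 0 / norm (p - b))
     = (\<lambda>v. - k * inner v (p - b) / norm (p - b) ^ 3)"
  proof
    fix h :: "real^3"
    have "inner h (sgn (p - b)) = inner h (p - b) / norm (p - b)"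
      by (simp add: sgn_div_norm divide_inverse mult.commute)
    then show "- k * (inverse (norm (p - b)) * inner h (sgn (p - b)) * inverse (norm (p - b))) + 0 / norm (p - b)
       = - k * inner h (p - b) / norm (p - b) ^ 3"
      using n by (simp add: field_simps power3_eq_cube)
  qed
  ultimately show ?thesis by simp
qed

locale M3 =
  fixes m :: "nat \<Rightarrow> real"
  assumes m1: "m 1 > 0" and m2: "m 2 > 0" and m3: "m 3 > 0" and msum: "m 1 + m 2 + m 3 = 1"
begin

sublocale abc "m 1" "m 2" "m 3" "qq m" "sig m"
  by unfold_locales (use m1 m2 m3 msum in \<open>simp_all add: qq_def sig_def\<close>)

lemma mhat1: "mhat m 1 = m 2 * m 3" and mhat2: "mhat m 2 = m 1 * m 3" and mhat3: "mhat m 3 = m 1 * m 2"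
proof -
  have "{1,2,3::nat} - {1} = {2,3}" "{1,2,3::nat} - {2} = {1,3}" "{1,2,3::nat} - {3} = {1,2}" by auto
  then show "mhat m 1 = m 2 * m 3" "mhat m 2 = m 1 * m 3" "mhat m 3 = m 1 * m 2"
    by (simp_all add: mhat_def)
qed

lemma m3e: "m 3 = 1 - m 1 - m 2" using msum by simp

lemma qq_sq: "qq m ^ 2 = m 1 * m 2 * m 3"
  using m1 m2 m3 by (simp add: qq_def)
lemma qq_pos: "qq m > 0"
  using m1 m2 m3 by (simp add: qq_def)

lemma sxsy: "sqrt (m 1 * m 2 / (m 1 + m 2)) * sqrt (m 3 * (m 1 + m 2)) = qq m"
proof -
  have "sqrt (m 1 * m 2 / (m 1 + m 2)) * sqrt (m 3 * (m 1 + m 2)) = sqrt (m 1 * m 2 / (m 1 + m 2) * (m 3 * (m 1 + m 2)))"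
    by (rule real_sqrt_mult[symmetric])
  also have "m 1 * m 2 / (m 1 + m 2) * (m 3 * (m 1 + m 2)) = m 1 * m 2 * m 3"
    using m1 m2 by (simp add: field_simps)
  finally show ?thesis by (simp add: qq_def)
qed

lemma bhat3: "bhat m 3 = vector [-1, 0, 0]"
proof -
  define t where "t = 1 / sqrt (m 3 * (1 - m 3))"
  have cc: "collision_config m 3 1 = of_real (- m 3 * t)" "collision_config m 3 2 = of_real (- m 3 * t)"
     "collision_config m 3 3 = of_real ((1 - m 3) * t)"
    by (simp_all add: collision_config_def Let_def t_def)
  have t2: "t * sqrt (m 3 * (1 - m 3)) = 1" using m3 m1 m2 msum by (simp add: t_def)
  have e: "sqrt (m 3 * (m 1 + m 2)) * ((1 - m 3) * t - (m 1 * (- m 3 * t) + m 2 * (- m 3 * t)) / (m 1 + m 2)) = 1"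
  proof -
    have "m 1 + m 2 = 1 - m 3" using msum by simp
    moreover have "(1 - m 3) * t - (m 1 * (- m 3 * t) + m 2 * (- m 3 * t)) / (m 1 + m 2) = t"
      using m1 m2 by (simp add: field_simps)
    ultimately show ?thesis using t2 by (simp add: mult.commute)
  qed
  have j1: "jacobi1 m (collision_config m 3) = of_real 0"
    using jac_real(1)[where m=m, OF cc] by simp
  have j2: "jacobi2 m (collision_config m 3) = of_real 1"
    using jac_real(2)[where m=m, OF cc] unfolding e .
  show ?thesis unfolding bhat_def using shape_real[OF j1 j2] by simp
qed

lemma bhat1: "bhat m 1 = vector [(m 2 - m 1 * m 3) / ((m 1 + m 2) * (1 - m 1)), 2 * qq m / ((m 1 + m 2) * (1 - m 1)), 0]"
proof -
  define t where "t = 1 / sqrt (m 1 * (1 - m 1))"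
  define sx where "sx = sqrt (m 1 * m 2 / (m 1 + m 2))"
  define sy where "sy = sqrt (m 3 * (m 1 + m 2))"
  have cc: "collision_config m 1 1 = of_real ((1 - m 1) * t)" "collision_config m 1 2 = of_real (- m 1 * t)"
     "collision_config m 1 3 = of_real (- m 1 * t)"
    by (simp_all add: collision_config_def Let_def t_def)
  have p1: "1 - m 1 > 0" using m2 m3 msum by simp
  have t2: "t^2 = 1 / (m 1 * (1 - m 1))" using m1 p1 by (simp add: t_def power_divide)
  have sx2: "sx^2 = m 1 * m 2 / (m 1 + m 2)" using m1 m2 by (simp add: sx_def)
  have sy2: "sy^2 = m 3 * (m 1 + m 2)" using m1 m2 m3 by (simp add: sy_def)
  have sxy: "sx * sy = qq m" using sxsy by (simp add: sx_def sy_def)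
  define X where "X = sx * (- m 1 * t - (1 - m 1) * t)"
  define Y where "Y = sy * (- m 1 * t - (m 1 * ((1 - m 1) * t) + m 2 * (- m 1 * t)) / (m 1 + m 2))"
  have X: "X = - sx * t" by (simp add: X_def algebra_simps)
  have Y: "Y = - sy * t * m 1 / (m 1 + m 2)"
    using m1 m2 msum unfolding Y_def by (simp add: field_simps)
  have j1: "jacobi1 m (collision_config m 1) = of_real X"
    using jac_real(1)[where m=m, OF cc] unfolding X_def sx_def .
  have j2: "jacobi2 m (collision_config m 1) = of_real Y"
    using jac_real(2)[where m=m, OF cc] unfolding Y_def sy_def .
  have e1: "X^2 - Y^2 = (m 2 - m 1 * m 3) / ((m 1 + m 2) * (1 - m 1))"
  proof -
    have "X^2 - Y^2 = sx^2 * t^2 - sy^2 * t^2 * m 1^2 / (m 1 + m 2)^2"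
      by (simp add: X Y power_mult_distrib power_divide)
    also have "\<dots> = (m 2 - m 1 * m 3) / ((m 1 + m 2) * (1 - m 1))"
    proof -
      have "m 1 \<noteq> 0" "m 1 + m 2 \<noteq> 0" "1 - m 1 \<noteq> 0" using m1 m2 p1 by auto
      then show ?thesis unfolding sx2 sy2 t2 by (simp add: divide_simps) algebra
    qed
    finally show ?thesis .
  qed
  have e2: "2 * X * Y = 2 * qq m / ((m 1 + m 2) * (1 - m 1))"
  proof -
    have "2 * X * Y = 2 * (sx * sy) * t^2 * m 1 / (m 1 + m 2)"
      by (simp add: X Y power2_eq_square)
    also have "\<dots> = 2 * qq m / ((m 1 + m 2) * (1 - m 1))"
      unfolding sxy t2 using m1 m2 p1 by (simp add: divide_simps)
    finally show ?thesis .
  qed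
  show ?thesis unfolding bhat_def using shape_real[OF j1 j2] e1 e2 by simp
qed

lemma bhat2: "bhat m 2 = vector [(m 1 - m 2 * m 3) / ((m 1 + m 2) * (1 - m 2)), - 2 * qq m / ((m 1 + m 2) * (1 - m 2)), 0]"
proof -
  define t where "t = 1 / sqrt (m 2 * (1 - m 2))"
  define sx where "sx = sqrt (m 1 * m 2 / (m 1 + m 2))"
  define sy where "sy = sqrt (m 3 * (m 1 + m 2))"
  have cc: "collision_config m 2 1 = of_real (- m 2 * t)" "collision_config m 2 2 = of_real ((1 - m 2) * t)"
     "collision_config m 2 3 = of_real (- m 2 * t)"
    by (simp_all add: collision_config_def Let_def t_def)
  have p1: "1 - m 2 > 0" using m1 m3 msum by simp
  have t2: "t^2 = 1 / (m 2 * (1 - m 2))" using m2 p1 by (simp add: t_def power_divide)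
  have sx2: "sx^2 = m 1 * m 2 / (m 1 + m 2)" using m1 m2 by (simp add: sx_def)
  have sy2: "sy^2 = m 3 * (m 1 + m 2)" using m1 m2 m3 by (simp add: sy_def)
  have sxy: "sx * sy = qq m" using sxsy by (simp add: sx_def sy_def)
  define X where "X = sx * ((1 - m 2) * t - - m 2 * t)"
  define Y where "Y = sy * (- m 2 * t - (m 1 * (- m 2 * t) + m 2 * ((1 - m 2) * t)) / (m 1 + m 2))"
  have X: "X = sx * t" by (simp add: X_def algebra_simps)
  have Y: "Y = - sy * t * m 2 / (m 1 + m 2)"
    using m1 m2 msum unfolding Y_def by (simp add: field_simps)
  have j1: "jacobi1 m (collision_config m 2) = of_real X"
    using jac_real(1)[where m=m, OF cc] unfolding X_def sx_def .
  have j2: "jacobi2 m (collision_config m 2) = of_real Y"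
    using jac_real(2)[where m=m, OF cc] unfolding Y_def sy_def .
  have e1: "X^2 - Y^2 = (m 1 - m 2 * m 3) / ((m 1 + m 2) * (1 - m 2))"
  proof -
    have "X^2 - Y^2 = sx^2 * t^2 - sy^2 * t^2 * m 2^2 / (m 1 + m 2)^2"
      by (simp add: X Y power_mult_distrib power_divide)
    also have "\<dots> = (m 1 - m 2 * m 3) / ((m 1 + m 2) * (1 - m 2))"
    proof -
      have "m 2 \<noteq> 0" "m 1 + m 2 \<noteq> 0" "1 - m 2 \<noteq> 0" using m1 m2 p1 by auto
      then show ?thesis unfolding sx2 sy2 t2 by (simp add: divide_simps) algebra
    qed
    finally show ?thesis .
  qed
  have e2: "2 * X * Y = - 2 * qq m / ((m 1 + m 2) * (1 - m 2))"
  proof -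
    have "2 * X * Y = - 2 * (sx * sy) * t^2 * m 2 / (m 1 + m 2)"
      by (simp add: X Y power2_eq_square)
    also have "\<dots> = - 2 * qq m / ((m 1 + m 2) * (1 - m 2))"
      unfolding sxy t2 using m1 m2 p1 by (simp add: divide_simps)
    finally show ?thesis .
  qed
  show ?thesis unfolding bhat_def using shape_real[OF j1 j2] e1 e2 by simp
qed

lemma mu1: "mu m 1 = m 2 * m 3 / (1 - m 1)" by (simp add: mu_def mhat1)
lemma mu2: "mu m 2 = m 1 * m 3 / (1 - m 2)" by (simp add: mu_def mhat2)
lemma mu3: "mu m 3 = m 1 * m 2 / (1 - m 3)" by (simp add: mu_def mhat3)

lemma kc_gen: assumes "mhat m i > 0" "m i < 1"
  shows "kcoef m i = 2 * (1 - m i) * sqrt (mu m i) ^ 3"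
proof -
  have "mhat m i powr (3/2) = mhat m i powr (1 + 1/2)" by simp
  also have "\<dots> = mhat m i powr 1 * mhat m i powr (1/2)" by (rule powr_add)
  also have "\<dots> = mhat m i * sqrt (mhat m i)"
    using assms by (simp add: powr_half_sqrt)
  finally have e: "mhat m i powr (3/2) = mhat m i * sqrt (mhat m i)" .
  have "sqrt (mu m i) ^ 3 = mu m i * sqrt (mu m i)"
    using assms by (simp add: power3_eq_cube mu_def)
  also have "\<dots> = mhat m i / (1 - m i) * (sqrt (mhat m i) / sqrt (1 - m i))"
    by (simp add: mu_def real_sqrt_divide)
  finally have "2 * (1 - m i) * sqrt (mu m i) ^ 3 = 2 * mhat m i * sqrt (mhat m i) / sqrt (1 - m i)"
    using assms by (simp add: field_simps)
  then show ?thesis by (simp add: kcoef_def e)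
qed

lemma kc: "i \<in> {1,2,3} \<Longrightarrow> kcoef m i = 2 * (1 - m i) * sqrt (mu m i) ^ 3"
  apply (rule kc_gen)
  using m1 m2 m3 msum by (auto simp: mhat1 mhat2 mhat3)

lemma mu_pos: "i \<in> {1,2,3} \<Longrightarrow> mu m i > 0"
  using m1 m2 m3 msum pos1 by (auto simp: mu1 mu2 mu3)

lemma Bcoords: assumes "\<And>i. w i = kcoef m i / norm (p - bhat m i) ^ 3"
  shows "Bfield m p = vector [
   w 1 * ((m 2 - m 1 * m 3) / ((m 1 + m 2) * (1 - m 1))) + w 2 * ((m 1 - m 2 * m 3) / ((m 1 + m 2) * (1 - m 2))) - w 3,
   w 1 * (2 * qq m / ((m 1 + m 2) * (1 - m 1))) + w 2 * (- 2 * qq m / ((m 1 + m 2) * (1 - m 2))), 0]"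
proof -
  have "Bfield m p = w 1 *\<^sub>R bhat m 1 + w 2 *\<^sub>R bhat m 2 + w 3 *\<^sub>R bhat m 3"
    by (simp add: Bfield_def assms add.assoc)
  also have "\<dots> = vector [
   w 1 * ((m 2 - m 1 * m 3) / ((m 1 + m 2) * (1 - m 1))) + w 2 * ((m 1 - m 2 * m 3) / ((m 1 + m 2) * (1 - m 2))) - w 3,
   w 1 * (2 * qq m / ((m 1 + m 2) * (1 - m 1))) + w 2 * (- 2 * qq m / ((m 1 + m 2) * (1 - m 2))), 0]"
    unfolding vec3_eq by (simp add: bhat1 bhat2 bhat3)
  finally show ?thesis .
qed

lemma bhat_z: "i \<in> {1,2,3} \<Longrightarrow> bhat m i $ 3 = 0"
  by (auto simp: bhat1 bhat2 bhat3)

lemma P1_eq: "P1 m = 2 * (m 1 * m 2 / (1 - m 3)) / sig m - 1" by (simp add: P1_def mu3)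

lemma norm_pp: "norm (pp m s) ^ 2 = P1 m ^ 2 + P2 m ^ 2 + s^2 * P3 m ^ 2"
  by (simp add: norm3_sq pp_def power_mult_distrib)

lemma P3_pos: "P3 m > 0" using qq_pos spos by (simp add: P3_def)

lemma B_zero_imp:
  assumes np: "norm p = 1" and nb: "p \<notin> bhat m ` {1,2,3}" and B0: "Bfield m p = 0"
  shows "p = pp m 1 \<or> p = pp m (-1)"
proof -
  define c1 where "c1 = (m 2 - m 1 * m 3) / ((m 1 + m 2) * (1 - m 1))"
  define e1 where "e1 = 2 * qq m / ((m 1 + m 2) * (1 - m 1))"
  define c2 where "c2 = (m 1 - m 2 * m 3) / ((m 1 + m 2) * (1 - m 2))"
  define e2 where "e2 = - 2 * qq m / ((m 1 + m 2) * (1 - m 2))"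
  define r where "r i = norm (p - bhat m i)" for i
  define w where "w i = kcoef m i / r i ^ 3" for i
  have rpos: "r i > 0" if "i \<in> {1,2,3}" for i
    using nb that by (auto simp: r_def)
  have kpos: "kcoef m i > 0" if "i \<in> {1,2,3}" for i
    using kc[OF that] mu_pos[OF that] pos1 that by (auto simp: m1 m2 m3)
  have Bc: "Bfield m p = vector [w 1 * c1 + w 2 * c2 - w 3, w 1 * e1 + w 2 * e2, 0]"
    unfolding c1_def c2_def e1_def e2_def by (rule Bcoords) (simp add: w_def r_def)
  have eqa: "w 1 * c1 + w 2 * c2 - w 3 = 0" and eqb: "w 1 * e1 + w 2 * e2 = 0"
    using B0 unfolding Bc vec3_eq by simp_all
  define \<tau> where "\<tau> = w 1 / (1 - m 1)"
  have w1: "w 1 = \<tau> * (1 - m 1)" using pos1 by (simp add: \<tau>_def)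
  have w2: "w 2 = \<tau> * (1 - m 2)"
  proof -
    have "2 * qq m / (m 1 + m 2) * (w 1 / (1 - m 1) - w 2 / (1 - m 2)) = 0"
      using eqb unfolding e1_def e2_def by (simp add: algebra_simps)
    moreover have "2 * qq m / (m 1 + m 2) \<noteq> 0" using qq_pos pos1 by simp
    ultimately have "w 2 / (1 - m 2) = \<tau>" by (simp add: \<tau>_def)
    then show ?thesis using pos1 by (simp add: field_simps)
  qed
  have w3: "w 3 = \<tau> * (1 - m 3)"
  proof -
    have "w 3 = \<tau> * ((1 - m 1) * c1 + (1 - m 2) * c2)" using eqa w1 w2 by (simp add: algebra_simps)
    also have "(1 - m 1) * c1 + (1 - m 2) * c2 = 1 - m 3" using S1 unfolding c1_def c2_def by simp
    finally show ?thesis .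
  qed
  have tpos: "\<tau> > 0"
  proof -
    have "w 1 > 0" unfolding w_def using kpos rpos by simp
    then show ?thesis using pos1 by (simp add: \<tau>_def)
  qed
  define sm where "sm i = sqrt (mu m i)" for i
  have cube: "(sm i / r i) ^ 3 = \<tau> / 2" if i: "i \<in> {1,2,3}" for i
  proof -
    have wi: "w i = \<tau> * (1 - m i)" using i w1 w2 w3 by auto
    have "1 - m i > 0" using i pos1 by auto
    have "2 * (1 - m i) * sm i ^ 3 / r i ^ 3 = \<tau> * (1 - m i)"
      using wi kc[OF i] by (simp add: w_def sm_def)
    moreover have "2 * (1 - m i) * sm i ^ 3 / r i ^ 3 = (1 - m i) * (2 * (sm i ^ 3 / r i ^ 3))" by simp
    ultimately have "(1 - m i) * (2 * (sm i ^ 3 / r i ^ 3)) = (1 - m i) * \<tau>" by (simp add: mult.commute)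
    then have "2 * (sm i ^ 3 / r i ^ 3) = \<tau>" using \<open>1 - m i > 0\<close> mult_left_cancel[of "1 - m i" "2 * (sm i ^ 3 / r i ^ 3)" \<tau>] by linarith
    then show ?thesis by (simp add: power_divide field_simps)
  qed
  define C where "C = sm 3 / r 3"
  have Cpos: "C > 0" using rpos[of 3] mu_pos[of 3] by (simp add: C_def sm_def)
  have rC: "r i ^ 2 = mu m i * (1 / C^2)" if i: "i \<in> {1,2,3}" for i
  proof -
    have "sm i / r i = C"
    proof (rule power_eq_imp_eq_base[of _ 3])
      show "(sm i / r i) ^ 3 = C ^ 3" using cube[OF i] cube[of 3] by (simp add: C_def)
      show "0 \<le> sm i / r i" using rpos[OF i] mu_pos[OF i] by (simp add: sm_def)
      show "0 \<le> C" using Cpos by simp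
    qed simp
    then have "r i = sm i / C" using rpos[OF i] Cpos by (auto simp: field_simps)
    then show ?thesis using mu_pos[OF i] by (simp add: sm_def power_divide)
  qed
  define ss where "ss = 1 / C^2"
  define x where "x = p $ 1"
  define y where "y = p $ 2"
  define z where "z = p $ 3"
  have E1: "x * c1 + y * e1 = 1 - mu m 1 * ss / 2"
  proof -
    have "r 1 ^ 2 = 2 - 2 * (x * c1 + y * e1)"
      unfolding r_def bhat1 x_def y_def c1_def e1_def by (rule rsq[OF np]) (use N1 in simp)
    moreover have "mu m 1 * ss = r 1 ^ 2" using rC[of 1] by (simp add: ss_def)
    ultimately show ?thesis by (simp add: field_simps)
  qed
  have E2: "x * c2 + y * e2 = 1 - mu m 2 * ss / 2"
  proof -
    have "r 2 ^ 2 = 2 - 2 * (x * c2 + y * e2)"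
      unfolding r_def bhat2 x_def y_def c2_def e2_def by (rule rsq[OF np]) (use N2 in simp)
    moreover have "mu m 2 * ss = r 2 ^ 2" using rC[of 2] by (simp add: ss_def)
    ultimately show ?thesis by (simp add: field_simps)
  qed
  have E3: "- x = 1 - mu m 3 * ss / 2"
  proof -
    have "r 3 ^ 2 = 2 - 2 * (x * (-1) + y * 0)"
      unfolding r_def bhat3 x_def y_def by (rule rsq[OF np]) simp
    moreover have "mu m 3 * ss = r 3 ^ 2" using rC[of 3] by (simp add: ss_def)
    ultimately show ?thesis by (simp add: field_simps)
  qed
  have comb: "(1 - m 1) * (x * c1 + y * e1) + (1 - m 2) * (x * c2 + y * e2) + (1 - m 3) * (- x) = 0"
  proof -
    have "(1 - m 1) * (x * c1 + y * e1) + (1 - m 2) * (x * c2 + y * e2) + (1 - m 3) * (- x)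
      = x * ((1 - m 1) * c1 + (1 - m 2) * c2 - (1 - m 3)) + y * ((1 - m 1) * e1 + (1 - m 2) * e2)"
      by (simp add: algebra_simps)
    also have "\<dots> = 0" using S1 S2 unfolding c1_def c2_def e1_def e2_def by simp
    finally show ?thesis .
  qed
  have "(1 - m 1) * (1 - mu m 1 * ss / 2) + (1 - m 2) * (1 - mu m 2 * ss / 2) + (1 - m 3) * (1 - mu m 3 * ss / 2) = 0"
    using comb unfolding E1 E2 E3 .
  moreover have "(1 - m 1) * (1 - mu m 1 * ss / 2) + (1 - m 2) * (1 - mu m 2 * ss / 2) + (1 - m 3) * (1 - mu m 3 * ss / 2)
     = (3 - (m 1 + m 2 + m 3)) - ss / 2 * ((1 - m 1) * mu m 1 + (1 - m 2) * mu m 2 + (1 - m 3) * mu m 3)"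
    by (simp add: field_simps)
  moreover have "(1 - m 1) * mu m 1 + (1 - m 2) * mu m 2 + (1 - m 3) * mu m 3 = sig m"
    using SM by (simp add: mu1 mu2 mu3)
  ultimately have "2 - ss / 2 * sig m = 0" using msum by simp
  then have ss: "ss = 4 / sig m" using spos by (simp add: field_simps)
  have xe: "x = P1 m" using E3 unfolding ss P1_def by (simp add: field_simps)
  have ye: "y = P2 m"
  proof -
    have A: "c1 * P1 m + e1 * P2 m = 1 - 2 * mu m 1 / sig m"
      using Q1 unfolding c1_def e1_def P1_eq P2_def mu1 by simp
    have B: "x * c1 + y * e1 = 1 - 2 * mu m 1 / sig m" using E1 ss by simp
    have B': "c1 * P1 m + e1 * y = 1 - 2 * mu m 1 / sig m" using B xe by (simp add: mult.commute)
    have "e1 * y = e1 * P2 m" using A B' by linarith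
    moreover have "e1 \<noteq> 0" using qq_pos pos1 by (simp add: e1_def)
    ultimately show ?thesis by simp
  qed
  have "x^2 + y^2 + z^2 = 1" using np norm3_sq[of p] by (simp add: x_def y_def z_def)
  moreover have "P1 m ^2 + P2 m ^2 + P3 m ^ 2 = 1" using Q3 unfolding P1_eq P2_def P3_def by simp
  ultimately have "z^2 = P3 m ^ 2" using xe ye by simp
  then have "z = P3 m \<or> z = - P3 m" by (simp add: power2_eq_iff)
  then show ?thesis
    unfolding vec3_eq pp_def using xe ye by (auto simp: x_def y_def z_def)
qed

lemma pp_facts:
  assumes s: "s = 1 \<or> s = -1"
  shows "norm (pp m s) = 1" "pp m s $ 3 = s * P3 m" "Bfield m (pp m s) = 0" "pp m s \<notin> bhat m ` {1,2,3}"
proof -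
  have s2: "s^2 = 1" using s by auto
  have "P1 m ^2 + P2 m ^2 + P3 m ^ 2 = 1" using Q3 unfolding P1_eq P2_def P3_def by simp
  then have "norm (pp m s) ^ 2 = 1" using norm_pp[of s] s2 by simp
  then show np: "norm (pp m s) = 1" using norm_ge_zero[of "pp m s"] by (auto simp: power2_eq_1_iff)
  show z: "pp m s $ 3 = s * P3 m" by (simp add: pp_def)
  show "pp m s \<notin> bhat m ` {1,2,3}"
    using z s P3_pos bhat_z by force
  define K where "K = sqrt (sig m) ^ 3 / 4"
  have key: "kcoef m i / norm (pp m s - bhat m i) ^ 3 = (1 - m i) * K"
    if i: "i \<in> {1,2,3}" and r2: "norm (pp m s - bhat m i) ^ 2 = 4 * mu m i / sig m" for i
  proof -
    have "norm (pp m s - bhat m i) = sqrt (4 * mu m i / sig m)"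
      using r2 by (metis norm_ge_zero real_sqrt_unique)
    also have "\<dots> = 2 * sqrt (mu m i) / sqrt (sig m)"
      by (simp add: real_sqrt_mult real_sqrt_divide)
    finally have r: "norm (pp m s - bhat m i) = 2 * sqrt (mu m i) / sqrt (sig m)" .
    have smp: "sqrt (mu m i) > 0" using mu_pos[OF i] by simp
    show ?thesis unfolding r kc[OF i] K_def using smp spos
      by (simp add: power_divide field_simps power_mult_distrib)
  qed
  have x: "pp m s $ 1 = P1 m" and y: "pp m s $ 2 = P2 m" by (simp_all add: pp_def)
  have r1: "norm (pp m s - bhat m 1) ^ 2 = 4 * mu m 1 / sig m"
  proof -
    have "norm (pp m s - bhat m 1) ^ 2 = 2 - 2 * (P1 m * ((m 2 - m 1 * m 3) / ((m 1 + m 2) * (1 - m 1))) + P2 m * (2 * qq m / ((m 1 + m 2) * (1 - m 1))))"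
      unfolding bhat1 using rsq[OF np, of "(m 2 - m 1 * m 3) / ((m 1 + m 2) * (1 - m 1))" "2 * qq m / ((m 1 + m 2) * (1 - m 1))"] N1 x y by simp
    also have "\<dots> = 4 * mu m 1 / sig m" using Q1 unfolding P1_eq[symmetric] P2_def[symmetric] mu1[symmetric]
      by (simp add: mult.commute)
    finally show ?thesis .
  qed
  have r2: "norm (pp m s - bhat m 2) ^ 2 = 4 * mu m 2 / sig m"
  proof -
    have "norm (pp m s - bhat m 2) ^ 2 = 2 - 2 * (P1 m * ((m 1 - m 2 * m 3) / ((m 1 + m 2) * (1 - m 2))) + P2 m * (- 2 * qq m / ((m 1 + m 2) * (1 - m 2))))"
      unfolding bhat2 using rsq[OF np, of "(m 1 - m 2 * m 3) / ((m 1 + m 2) * (1 - m 2))" "- 2 * qq m / ((m 1 + m 2) * (1 - m 2))"] N2 x y by simp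
    also have "\<dots> = 4 * mu m 2 / sig m" using Q2 unfolding P1_eq[symmetric] P2_def[symmetric] mu2[symmetric]
      by (simp add: mult.commute)
    finally show ?thesis .
  qed
  have r3: "norm (pp m s - bhat m 3) ^ 2 = 4 * mu m 3 / sig m"
  proof -
    have "norm (pp m s - bhat m 3) ^ 2 = 2 - 2 * (P1 m * (-1) + P2 m * 0)"
      unfolding bhat3 using rsq[OF np, of "-1" 0] x y by simp
    also have "\<dots> = 4 * mu m 3 / sig m" using spos by (simp add: P1_def field_simps)
    finally show ?thesis .
  qed
  define w where "w i = kcoef m i / norm (pp m s - bhat m i) ^ 3" for i
  have w: "w 1 = (1 - m 1) * K" "w 2 = (1 - m 2) * K" "w 3 = (1 - m 3) * K"
    using key[OF _ r1] key[OF _ r2] key[OF _ r3] by (simp_all add: w_def)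
  have "Bfield m (pp m s) = vector [
   w 1 * ((m 2 - m 1 * m 3) / ((m 1 + m 2) * (1 - m 1))) + w 2 * ((m 1 - m 2 * m 3) / ((m 1 + m 2) * (1 - m 2))) - w 3,
   w 1 * (2 * qq m / ((m 1 + m 2) * (1 - m 1))) + w 2 * (- 2 * qq m / ((m 1 + m 2) * (1 - m 2))), 0]"
    by (rule Bcoords) (simp add: w_def)
  also have "\<dots> = 0"
  proof -
    have "w 1 * ((m 2 - m 1 * m 3) / ((m 1 + m 2) * (1 - m 1))) + w 2 * ((m 1 - m 2 * m 3) / ((m 1 + m 2) * (1 - m 2))) - w 3
       = K * ((1 - m 1) * ((m 2 - m 1 * m 3) / ((m 1 + m 2) * (1 - m 1))) + (1 - m 2) * ((m 1 - m 2 * m 3) / ((m 1 + m 2) * (1 - m 2))) - (1 - m 3))"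
      unfolding w by (simp add: algebra_simps)
    also have "\<dots> = 0" using S1 by simp
    finally have A: "w 1 * ((m 2 - m 1 * m 3) / ((m 1 + m 2) * (1 - m 1))) + w 2 * ((m 1 - m 2 * m 3) / ((m 1 + m 2) * (1 - m 2))) - w 3 = 0" .
    have "w 1 * (2 * qq m / ((m 1 + m 2) * (1 - m 1))) + w 2 * (- 2 * qq m / ((m 1 + m 2) * (1 - m 2)))
       = K * ((1 - m 1) * (2 * qq m / ((m 1 + m 2) * (1 - m 1))) + (1 - m 2) * (- 2 * qq m / ((m 1 + m 2) * (1 - m 2))))"
      unfolding w by (simp add: algebra_simps)
    also have "\<dots> = 0" using S2 by simp
    finally have B: "w 1 * (2 * qq m / ((m 1 + m 2) * (1 - m 1))) + w 2 * (- 2 * qq m / ((m 1 + m 2) * (1 - m 2))) = 0" .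
    show ?thesis unfolding vec3_eq using A B by simp
  qed
  finally show "Bfield m (pp m s) = 0" .
qed

lemma Bz3: "Bfield m p $ 3 = 0"
  by (simp add: Bfield_def bhat_z)

lemma crit_iff:
  assumes np: "norm p = 1" and z: "p $ 3 \<noteq> 0"
  shows "sphere_critical (Ustar m) p \<longleftrightarrow> Bfield m p = 0"
proof -
  have nb: "p \<noteq> bhat m i" if "i \<in> {1,2,3}" for i
    using z bhat_z[OF that] by auto
  define D0 where "D0 v = (\<Sum>i\<in>{1,2,3::nat}. - kcoef m i * inner v (p - bhat m i) / norm (p - bhat m i) ^ 3)" for v
  have U: "Ustar m = (\<lambda>x. \<Sum>i\<in>{1,2,3::nat}. kcoef m i / norm (x - bhat m i))"
    by (rule ext) (simp add: Ustar_def)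
  have hasD: "(Ustar m has_derivative D0) (at p)"
    unfolding U D0_def[abs_def]
    by (rule has_derivative_sum) (rule dnorm[OF nb], simp)
  have tang: "D0 v = inner v (Bfield m p)" if "inner v p = 0" for v
  proof -
    have "D0 v = (\<Sum>i\<in>{1,2,3::nat}. kcoef m i / norm (p - bhat m i) ^ 3 * inner v (bhat m i))"
      unfolding D0_def
    proof (rule sum.cong)
      fix i assume "i \<in> {1,2,3::nat}"
      show "- kcoef m i * inner v (p - bhat m i) / norm (p - bhat m i) ^ 3 = kcoef m i / norm (p - bhat m i) ^ 3 * inner v (bhat m i)"
        using that by (simp add: inner_diff_right inner_commute)
    qed simp
    also have "\<dots> = inner v (Bfield m p)"
      by (simp add: Bfield_def inner_add_right inner_scaleR_right)
    finally show ?thesis .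
  qed
  show ?thesis
  proof
    assume "sphere_critical (Ustar m) p"
    then obtain D where hD: "(Ustar m has_derivative D) (at p)" and D0v: "\<And>v. inner v p = 0 \<Longrightarrow> D v = 0"
      unfolding sphere_critical_def by blast
    have "D = D0" using has_derivative_unique[OF hD hasD] .
    define B where "B = Bfield m p"
    have B3: "B $ 3 = 0" by (simp add: B_def Bz3)
    define v where "v = (vector [p$3 * B$1, p$3 * B$2, - (B$1 * p$1 + B$2 * p$2)] :: real^3)"
    have vp: "inner v p = 0" by (simp add: v_def inner3 algebra_simps)
    have "inner v B = 0" using D0v[OF vp] tang[OF vp] \<open>D = D0\<close> by (simp add: B_def)
    then have "p$3 * (B$1^2 + B$2^2) = 0" by (simp add: v_def inner3 B3 power2_eq_square algebra_simps)
    then have "B$1^2 + B$2^2 = 0" using z by simp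
    then have "B$1 = 0" "B$2 = 0" by (simp_all add: sum_power2_eq_zero_iff)
    then show "Bfield m p = 0" using B3 unfolding B_def[symmetric] vec3_eq by simp
  next
    assume B0: "Bfield m p = 0"
    show "sphere_critical (Ustar m) p"
      unfolding sphere_critical_def using hasD tang B0 by auto
  qed
qed

lemma shape_uw:
  fixes a :: "nat \<Rightarrow> complex"
  defines "u \<equiv> a 2 - a 1" and "w \<equiv> (a 3 - a 1) - of_real (m 2 / (m 1 + m 2)) * (a 2 - a 1)"
  shows "shape m a = vector [m 1 * m 2 / (m 1 + m 2) * (cmod u)^2 - m 3 * (m 1 + m 2) * (cmod w)^2,
                            2 * qq m * Re (u * cnj w), 2 * qq m * Im (u * cnj w)]"
proof -
  define sx where "sx = sqrt (m 1 * m 2 / (m 1 + m 2))"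
  define sy where "sy = sqrt (m 3 * (m 1 + m 2))"
  have nz: "complex_of_real (m 1) + complex_of_real (m 2) \<noteq> 0"
    using pos1 by (metis of_real_add of_real_eq_0_iff less_irrefl)
  have J1: "jacobi1 m a = of_real sx * u" by (simp add: jacobi1_def sx_def u_def)
  have "a 3 - (of_real (m 1) * a 1 + of_real (m 2) * a 2) / of_real (m 1 + m 2) = w"
    unfolding w_def using nz by (simp add: field_simps)
  then have J2: "jacobi2 m a = of_real sy * w" by (simp add: jacobi2_def sy_def)
  have sx2: "sx^2 = m 1 * m 2 / (m 1 + m 2)" using m1 m2 by (simp add: sx_def)
  have sy2: "sy^2 = m 3 * (m 1 + m 2)" using m1 m2 m3 by (simp add: sy_def)
  have sxy: "sx * sy = qq m" using sxsy by (simp add: sx_def sy_def)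
  have c1: "(cmod (of_real sx * u))^2 = sx^2 * (cmod u)^2"
    by (simp add: norm_mult power_mult_distrib)
  have c2: "(cmod (of_real sy * w))^2 = sy^2 * (cmod w)^2"
    by (simp add: norm_mult power_mult_distrib)
  have pr: "of_real sx * u * cnj (of_real sy * w) = of_real (sx * sy) * (u * cnj w)"
    by (simp add: algebra_simps)
  show ?thesis
    unfolding shape_def Let_def J1 J2 c1 c2 pr sx2 sy2 sxy[symmetric]
    by (simp add: mult.assoc)
qed

end

context M3 begin
lemma norm_pairs:
  assumes "normalized_config m a"
  shows "m 1 * m 2 * (cmod (a 2 - a 1))^2 + m 1 * m 3 * (cmod (a 3 - a 1))^2 + m 2 * m 3 * (cmod (a 3 - a 2))^2 = 1"
proof -
  have com: "of_real (m 1) * a 1 + of_real (m 2) * a 2 + of_real (m 3) * a 3 = 0"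
    and nn: "m 1 * (cmod (a 1))^2 + m 2 * (cmod (a 2))^2 + m 3 * (cmod (a 3))^2 = 1"
    using assms by (simp_all add: normalized_config_def add.assoc)
  have cx: "m 1 * Re (a 1) + m 2 * Re (a 2) + m 3 * Re (a 3) = 0"
    using arg_cong[OF com, of Re] by simp
  have cy: "m 1 * Im (a 1) + m 2 * Im (a 2) + m 3 * Im (a 3) = 0"
    using arg_cong[OF com, of Im] by simp
  have nn': "m 1 * (Re (a 1)^2 + Im (a 1)^2) + m 2 * (Re (a 2)^2 + Im (a 2)^2) + m 3 * (Re (a 3)^2 + Im (a 3)^2) = 1"
    using nn by (simp add: cmod_power2)
  show ?thesis
  proof -
    have pid: "(p1+p2+p3)*(p1*x1^2+p2*x2^2+p3*x3^2) - (p1*x1+p2*x2+p3*x3)^2 = p1*p2*(x2-x1)^2 + p1*p3*(x3-x1)^2 + p2*p3*(x3-x2)^2" for p1 p2 p3 x1 x2 x3 :: real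
      by (simp add: power2_eq_square algebra_simps)
    have A: "m 1 * m 2 * (Re (a 2 - a 1))^2 + m 1 * m 3 * (Re (a 3 - a 1))^2 + m 2 * m 3 * (Re (a 3 - a 2))^2
      = m 1 * Re (a 1)^2 + m 2 * Re (a 2)^2 + m 3 * Re (a 3)^2"
      using pid[of "m 1" "m 2" "m 3" "Re (a 1)" "Re (a 2)" "Re (a 3)"] cx msum by simp
    have B: "m 1 * m 2 * (Im (a 2 - a 1))^2 + m 1 * m 3 * (Im (a 3 - a 1))^2 + m 2 * m 3 * (Im (a 3 - a 2))^2
      = m 1 * Im (a 1)^2 + m 2 * Im (a 2)^2 + m 3 * Im (a 3)^2"
      using pid[of "m 1" "m 2" "m 3" "Im (a 1)" "Im (a 2)" "Im (a 3)"] cy msum by simp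
    have "m 1 * m 2 * ((Re (a 2 - a 1))^2 + (Im (a 2 - a 1))^2) + m 1 * m 3 * ((Re (a 3 - a 1))^2 + (Im (a 3 - a 1))^2) + m 2 * m 3 * ((Re (a 3 - a 2))^2 + (Im (a 3 - a 2))^2)
      = (m 1 * m 2 * (Re (a 2 - a 1))^2 + m 1 * m 3 * (Re (a 3 - a 1))^2 + m 2 * m 3 * (Re (a 3 - a 2))^2)
      + (m 1 * m 2 * (Im (a 2 - a 1))^2 + m 1 * m 3 * (Im (a 3 - a 1))^2 + m 2 * m 3 * (Im (a 3 - a 2))^2)"
      by (simp only: algebra_simps)
    also have "\<dots> = 1" unfolding A B using nn' by (simp add: algebra_simps)
    finally show ?thesis unfolding cmod_power2 .
  qed
qed

lemma equi:
  assumes nc: "normalized_config m a" and e1: "cmod (a 1 - a 2) = cmod (a 2 - a 3)" and e2: "cmod (a 2 - a 3) = cmod (a 3 - a 1)"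
  shows "shape m a = vector [P1 m, P2 m, 2 * qq m * (Im (a 2 - a 1) * Re (a 3 - a 1) - Re (a 2 - a 1) * Im (a 3 - a 1))]"
    and "(Im (a 2 - a 1) * Re (a 3 - a 1) - Re (a 2 - a 1) * Im (a 3 - a 1))^2 = 3 / (4 * sig m ^ 2)"
proof -
  define u1 where "u1 = Re (a 2 - a 1)"
  define u2 where "u2 = Im (a 2 - a 1)"
  define v1 where "v1 = Re (a 3 - a 1)"
  define v2 where "v2 = Im (a 3 - a 1)"
  define l where "l = m 2 / (m 1 + m 2)"
  define d where "d = u1^2 + u2^2"
  have h1: "v1^2 + v2^2 = d"
  proof -
    have "cmod (a 1 - a 2) = cmod (a 2 - a 1)" by (simp add: norm_minus_commute)
    then have "(cmod (a 2 - a 1))^2 = (cmod (a 3 - a 1))^2" using e1 e2 by simp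
    then show ?thesis by (simp add: cmod_power2 u1_def u2_def v1_def v2_def d_def)
  qed
  have h2: "(v1 - u1)^2 + (v2 - u2)^2 = d"
  proof -
    have "cmod (a 1 - a 2) = cmod (a 2 - a 1)" by (simp add: norm_minus_commute)
    moreover have "cmod (a 2 - a 3) = cmod (a 3 - a 2)" by (simp add: norm_minus_commute)
    ultimately have "(cmod (a 2 - a 1))^2 = (cmod (a 3 - a 2))^2" using e1 by simp
    moreover have A: "v1 - u1 = Re (a 3 - a 2)" "v2 - u2 = Im (a 3 - a 2)" by (simp_all add: u1_def u2_def v1_def v2_def)
    moreover have "(v1 - u1)^2 + (v2 - u2)^2 = (cmod (a 3 - a 2))^2" unfolding A cmod_power2 ..
    moreover have "d = (cmod (a 2 - a 1))^2" unfolding d_def u1_def u2_def cmod_power2 ..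
    ultimately show ?thesis by simp
  qed
  have dot: "u1 * v1 + u2 * v2 = d / 2"
    using h1 h2 unfolding d_def by (simp add: power2_eq_square algebra_simps)
  have sd: "sig m * d = 1"
  proof -
    have "cmod (a 1 - a 2) = cmod (a 2 - a 1)" by (simp add: norm_minus_commute)
    moreover have "cmod (a 2 - a 3) = cmod (a 3 - a 2)" by (simp add: norm_minus_commute)
    ultimately have "(cmod (a 2 - a 1))^2 = d" "(cmod (a 3 - a 1))^2 = d" "(cmod (a 3 - a 2))^2 = d"
      using e1 e2 h1 by (simp_all add: cmod_power2 u1_def u2_def v1_def v2_def d_def)
    then show ?thesis using norm_pairs[OF nc] by (simp add: sig_def algebra_simps)
  qed
  have dpos: "d = 1 / sig m" using sd spos by (simp add: field_simps)
  have sh: "shape m a = vector [m 1 * m 2 / (m 1 + m 2) * d - m 3 * (m 1 + m 2) * ((v1 - l * u1)^2 + (v2 - l * u2)^2),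
          2 * qq m * (u1 * (v1 - l * u1) + u2 * (v2 - l * u2)), 2 * qq m * (u2 * v1 - u1 * v2)]"
  proof -
    define w where "w = (a 3 - a 1) - of_real (m 2 / (m 1 + m 2)) * (a 2 - a 1)"
    have Rw: "Re w = v1 - l * u1" "Im w = v2 - l * u2" by (simp_all add: w_def v1_def v2_def u1_def u2_def l_def)
    have ca: "(cmod (a 2 - a 1))^2 = d" unfolding d_def u1_def u2_def cmod_power2 ..
    have cw: "(cmod w)^2 = (v1 - l * u1)^2 + (v2 - l * u2)^2" unfolding cmod_power2 Rw ..
    have re: "Re ((a 2 - a 1) * cnj w) = u1 * (v1 - l * u1) + u2 * (v2 - l * u2)"
      by (simp add: Rw u1_def u2_def algebra_simps)
    have im: "Im ((a 2 - a 1) * cnj w) = u2 * v1 - u1 * v2"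
    proof -
      have "Im ((a 2 - a 1) * cnj w) = u2 * (v1 - l * u1) - u1 * (v2 - l * u2)"
        by (simp add: Rw u1_def u2_def algebra_simps)
      also have "\<dots> = u2 * v1 - u1 * v2" by (simp add: algebra_simps)
      finally show ?thesis .
    qed
    show ?thesis using shape_uw[of a] unfolding w_def[symmetric] ca cw re im by simp
  qed
  have w2: "(v1 - l * u1)^2 + (v2 - l * u2)^2 = d * (1 - l + l^2)"
  proof -
    have "(v1 - l * u1)^2 + (v2 - l * u2)^2 = (v1^2 + v2^2) - 2 * l * (u1 * v1 + u2 * v2) + l^2 * (u1^2 + u2^2)"
      by (simp add: power2_eq_square algebra_simps)
    then show ?thesis unfolding h1 dot d_def[symmetric] by (simp add: algebra_simps)
  qed
  have x: "m 1 * m 2 / (m 1 + m 2) * d - m 3 * (m 1 + m 2) * ((v1 - l * u1)^2 + (v2 - l * u2)^2) = P1 m"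
  proof -
    have "m 1 * m 2 / (m 1 + m 2) * d - m 3 * (m 1 + m 2) * ((v1 - l * u1)^2 + (v2 - l * u2)^2)
        = d * (m 1 * m 2 / (m 1 + m 2) - m 3 * (m 1 + m 2) * (1 - l + l^2))"
      unfolding w2 by (simp add: algebra_simps)
    also have "\<dots> = d * (2 * (m 1 * m 2 / (1 - m 3)) - sig m)" unfolding l_def I1 ..
    also have "\<dots> = P1 m" unfolding P1_eq dpos using spos by (simp add: field_simps)
    finally show ?thesis .
  qed
  have y: "2 * qq m * (u1 * (v1 - l * u1) + u2 * (v2 - l * u2)) = P2 m"
  proof -
    have "u1 * (v1 - l * u1) + u2 * (v2 - l * u2) = d / 2 - l * d"
      using dot unfolding d_def by (simp add: power2_eq_square algebra_simps)
    moreover have "2 * qq m * (d / 2 - l * d) = P2 m"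
    proof -
      have "m 1 + m 2 \<noteq> 0" "sig m \<noteq> 0" using pos1 spos by auto
      then show ?thesis unfolding P2_def dpos l_def by (simp add: divide_simps)
    qed
    ultimately show ?thesis by simp
  qed
  show "shape m a = vector [P1 m, P2 m, 2 * qq m * (Im (a 2 - a 1) * Re (a 3 - a 1) - Re (a 2 - a 1) * Im (a 3 - a 1))]"
    unfolding sh x y by (simp add: u1_def u2_def v1_def v2_def)
  have "(u2 * v1 - u1 * v2)^2 = (u1^2 + u2^2) * (v1^2 + v2^2) - (u1 * v1 + u2 * v2)^2"
    by (simp add: power2_eq_square algebra_simps)
  also have "\<dots> = 3 / (4 * sig m ^ 2)" unfolding h1 dot d_def[symmetric] dpos
    by (simp add: power2_eq_square field_simps)
  finally show "(Im (a 2 - a 1) * Re (a 3 - a 1) - Re (a 2 - a 1) * Im (a 3 - a 1))^2 = 3 / (4 * sig m ^ 2)"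
    by (simp add: u1_def u2_def v1_def v2_def)
qed

lemma com_pairs:
  assumes com: "of_real (m 1) * a 1 + of_real (m 2) * a 2 + of_real (m 3) * a 3 = 0"
  shows "m 1 * (cmod (a 1))^2 + m 2 * (cmod (a 2))^2 + m 3 * (cmod (a 3))^2
     = m 1 * m 2 * (cmod (a 2 - a 1))^2 + m 1 * m 3 * (cmod (a 3 - a 1))^2 + m 2 * m 3 * (cmod (a 3 - a 2))^2"
proof -
  have cx: "m 1 * Re (a 1) + m 2 * Re (a 2) + m 3 * Re (a 3) = 0"
    using arg_cong[OF com, of Re] by simp
  have cy: "m 1 * Im (a 1) + m 2 * Im (a 2) + m 3 * Im (a 3) = 0"
    using arg_cong[OF com, of Im] by simp
  have pid: "(p1+p2+p3)*(p1*x1^2+p2*x2^2+p3*x3^2) - (p1*x1+p2*x2+p3*x3)^2 = p1*p2*(x2-x1)^2 + p1*p3*(x3-x1)^2 + p2*p3*(x3-x2)^2" for p1 p2 p3 x1 x2 x3 :: real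
    by (simp add: power2_eq_square algebra_simps)
  have A: "m 1 * m 2 * (Re (a 2 - a 1))^2 + m 1 * m 3 * (Re (a 3 - a 1))^2 + m 2 * m 3 * (Re (a 3 - a 2))^2
    = m 1 * Re (a 1)^2 + m 2 * Re (a 2)^2 + m 3 * Re (a 3)^2"
    using pid[of "m 1" "m 2" "m 3" "Re (a 1)" "Re (a 2)" "Re (a 3)"] cx msum by simp
  have B: "m 1 * m 2 * (Im (a 2 - a 1))^2 + m 1 * m 3 * (Im (a 3 - a 1))^2 + m 2 * m 3 * (Im (a 3 - a 2))^2
    = m 1 * Im (a 1)^2 + m 2 * Im (a 2)^2 + m 3 * Im (a 3)^2"
    using pid[of "m 1" "m 2" "m 3" "Im (a 1)" "Im (a 2)" "Im (a 3)"] cy msum by simp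
  show ?thesis unfolding cmod_power2 using A B by (simp add: algebra_simps)
qed

lemma exists_equi:
  assumes eps: "\<epsilon> = 1 \<or> \<epsilon> = -1"
  shows "\<exists>a. normalized_config m a \<and> cmod (a 1 - a 2) = cmod (a 2 - a 3) \<and> cmod (a 2 - a 3) = cmod (a 3 - a 1)
            \<and> shape m a = pp m (- \<epsilon>)"
proof -
  define L where "L = 1 / sqrt (sig m)"
  have Lpos: "L > 0" using spos by (simp add: L_def)
  have L2: "sig m * L^2 = 1" using spos by (simp add: L_def power_divide)
  have e2: "\<epsilon>^2 = 1" using eps by auto
  define e3 where "e3 = Complex (L / 2) (\<epsilon> * L * sqrt 3 / 2)"
  define c where "c = of_real (m 2) * of_real L + of_real (m 3) * e3"
  define a where "a = (\<lambda>j::nat. if j = 1 then - c else if j = 2 then of_real L - c else e3 - c)"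
  have a1: "a 1 = - c" and a2: "a 2 = of_real L - c" and a3: "a 3 = e3 - c" by (simp_all add: a_def)
  have d21: "a 2 - a 1 = of_real L" and d31: "a 3 - a 1 = e3" and d32: "a 3 - a 2 = e3 - of_real L"
    by (simp_all add: a1 a2 a3)
  have n21: "(cmod (a 2 - a 1))^2 = L^2" unfolding d21 by simp
  have n31: "(cmod (a 3 - a 1))^2 = L^2" unfolding d31 cmod_power2 e3_def
    using e2 by (simp add: power2_eq_square field_simps)
  have n32: "(cmod (a 3 - a 2))^2 = L^2" unfolding d32 cmod_power2 e3_def
    using e2 by (simp add: power2_eq_square field_simps)
  have com: "of_real (m 1) * a 1 + of_real (m 2) * a 2 + of_real (m 3) * a 3 = 0"
  proof -
    have "of_real (m 1) * a 1 + of_real (m 2) * a 2 + of_real (m 3) * a 3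
       = c - (of_real (m 1) + of_real (m 2) + of_real (m 3)) * c"
      unfolding a1 a2 a3 c_def by (simp add: algebra_simps)
    also have "of_real (m 1) + of_real (m 2) + of_real (m 3) = (1::complex)"
      using msum by (metis of_real_1 of_real_add)
    finally show ?thesis by simp
  qed
  have nc: "normalized_config m a"
  proof -
    have "m 1 * (cmod (a 1))^2 + m 2 * (cmod (a 2))^2 + m 3 * (cmod (a 3))^2 = sig m * L^2"
      unfolding com_pairs[OF com] n21 n31 n32 sig_def by (simp add: algebra_simps)
    then show ?thesis unfolding normalized_config_def using com L2 by (simp add: add.assoc)
  qed
  have c21: "cmod (a 2 - a 1) = L" using n21 Lpos by (simp add: power2_eq_iff_nonneg)
  have c31: "cmod (a 3 - a 1) = L" using n31 Lpos by (simp add: power2_eq_iff_nonneg)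
  have c32: "cmod (a 3 - a 2) = L" using n32 Lpos by (simp add: power2_eq_iff_nonneg)
  have eq1: "cmod (a 1 - a 2) = cmod (a 2 - a 3)" using c21 c32 by (simp add: norm_minus_commute)
  have eq2: "cmod (a 2 - a 3) = cmod (a 3 - a 1)" using c31 c32 by (simp add: norm_minus_commute)
  have "shape m a = vector [P1 m, P2 m, 2 * qq m * (Im (a 2 - a 1) * Re (a 3 - a 1) - Re (a 2 - a 1) * Im (a 3 - a 1))]"
    by (rule equi(1)[OF nc eq1 eq2])
  also have "2 * qq m * (Im (a 2 - a 1) * Re (a 3 - a 1) - Re (a 2 - a 1) * Im (a 3 - a 1)) = - \<epsilon> * P3 m"
  proof -
    have "2 * qq m * (Im (a 2 - a 1) * Re (a 3 - a 1) - Re (a 2 - a 1) * Im (a 3 - a 1)) = - \<epsilon> * sqrt 3 * qq m * L^2"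
      unfolding d21 d31 e3_def by (simp add: power2_eq_square)
    also have "\<dots> = - \<epsilon> * P3 m" unfolding P3_def using L2 spos by (simp add: field_simps)
    finally show ?thesis .
  qed
  finally have "shape m a = pp m (- \<epsilon>)" by (simp add: pp_def)
  then show ?thesis using nc eq1 eq2 by blast
qed

lemma equi_set: "equilateral_shapes m = {pp m 1, pp m (-1)}"
proof
  show "equilateral_shapes m \<subseteq> {pp m 1, pp m (-1)}"
  proof
    fix p assume "p \<in> equilateral_shapes m"
    then obtain a where p: "p = shape m a" and nc: "normalized_config m a"
      and eq1: "cmod (a 1 - a 2) = cmod (a 2 - a 3)" and eq2: "cmod (a 2 - a 3) = cmod (a 3 - a 1)"
      unfolding equilateral_shapes_def by blast
    define X where "X = Im (a 2 - a 1) * Re (a 3 - a 1) - Re (a 2 - a 1) * Im (a 3 - a 1)"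
    have sh: "shape m a = vector [P1 m, P2 m, 2 * qq m * X]" using equi(1)[OF nc eq1 eq2] by (simp add: X_def)
    have X2: "X^2 = 3 / (4 * sig m ^ 2)" using equi(2)[OF nc eq1 eq2] by (simp add: X_def)
    have "(2 * qq m * X)^2 = P3 m ^ 2"
      unfolding P3_def power_mult_distrib X2 using spos by (simp add: power_divide field_simps)
    then have "2 * qq m * X = P3 m \<or> 2 * qq m * X = - P3 m" by (simp add: power2_eq_iff)
    then show "p \<in> {pp m 1, pp m (-1)}" unfolding p sh pp_def by auto
  qed
next
  show "{pp m 1, pp m (-1)} \<subseteq> equilateral_shapes m"
  proof -
    obtain a where "normalized_config m a \<and> cmod (a 1 - a 2) = cmod (a 2 - a 3) \<and> cmod (a 2 - a 3) = cmod (a 3 - a 1)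
            \<and> shape m a = pp m (- (-1))" using exists_equi[of "-1"] by auto
    then have H: "normalized_config m a" "cmod (a 1 - a 2) = cmod (a 2 - a 3)" "cmod (a 2 - a 3) = cmod (a 3 - a 1)"
      and sa: "shape m a = pp m 1" by simp_all
    have "shape m a \<in> equilateral_shapes m" unfolding equilateral_shapes_def using H by blast
    then have A: "pp m 1 \<in> equilateral_shapes m" using sa by simp
    obtain b where "normalized_config m b \<and> cmod (b 1 - b 2) = cmod (b 2 - b 3) \<and> cmod (b 2 - b 3) = cmod (b 3 - b 1)
            \<and> shape m b = pp m (- 1)" using exists_equi[of "1"] by auto
    then have H: "normalized_config m b" "cmod (b 1 - b 2) = cmod (b 2 - b 3)" "cmod (b 2 - b 3) = cmod (b 3 - b 1)"
      and sb: "shape m b = pp m (-1)" by simp_all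
    have "shape m b \<in> equilateral_shapes m" unfolding equilateral_shapes_def using H by blast
    then have B: "pp m (-1) \<in> equilateral_shapes m" using sb by simp
    show ?thesis using A B by simp
  qed
qed

end

theorem mainTheorem18:
  fixes m :: "nat \<Rightarrow> real"
  assumes "m 1 > 0" and "m 2 > 0" and "m 3 > 0" and "m 1 + m 2 + m 3 = 1"
  shows "\<exists>p0plus p0minus.
     equilateral_shapes m = {p0plus, p0minus} \<and> p0plus $ 3 > 0 \<and> p0minus $ 3 < 0 \<and>
     {p. norm p = 1 \<and> p $ 3 \<noteq> 0 \<and> sphere_critical (Ustar m) p} = {p0plus, p0minus} \<and>
     {p. norm p = 1 \<and> p \<notin> bhat m ` {1,2,3} \<and> Bfield m p = 0} = {p0plus, p0minus}"
proof -
  interpret M3 m using assms by unfold_locales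
  have f1: "norm (pp m 1) = 1" "pp m 1 $ 3 = P3 m" "Bfield m (pp m 1) = 0" "pp m 1 \<notin> bhat m ` {1,2,3}"
    using pp_facts[of 1] by simp_all
  have f2: "norm (pp m (-1)) = 1" "pp m (-1) $ 3 = - P3 m" "Bfield m (pp m (-1)) = 0" "pp m (-1) \<notin> bhat m ` {1,2,3}"
    using pp_facts[of "-1"] by simp_all
  have S2: "{p. norm p = 1 \<and> p \<notin> bhat m ` {1,2,3} \<and> Bfield m p = 0} = {pp m 1, pp m (-1)}"
    using B_zero_imp f1 f2 by auto
  have S1: "{p. norm p = 1 \<and> p $ 3 \<noteq> 0 \<and> sphere_critical (Ustar m) p} = {pp m 1, pp m (-1)}"
  proof (intro equalityI subsetI)
    fix p assume "p \<in> {p. norm p = 1 \<and> p $ 3 \<noteq> 0 \<and> sphere_critical (Ustar m) p}"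
    then have np: "norm p = 1" and z: "p $ 3 \<noteq> 0" and cr: "sphere_critical (Ustar m) p" by auto
    have "Bfield m p = 0" using crit_iff[OF np z] cr by simp
    moreover have "p \<notin> bhat m ` {1,2,3}" using z bhat_z by auto
    ultimately show "p \<in> {pp m 1, pp m (-1)}" using B_zero_imp[OF np] by auto
  next
    fix p assume "p \<in> {pp m 1, pp m (-1)}"
    then show "p \<in> {p. norm p = 1 \<and> p $ 3 \<noteq> 0 \<and> sphere_critical (Ustar m) p}"
      using f1 f2 P3_pos crit_iff by auto
  qed
  show ?thesis
    by (rule exI[of _ "pp m 1"], rule exI[of _ "pp m (-1)"])
       (use equi_set S1 S2 f1 f2 P3_pos in simp)
qed

end
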